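(* Let $\{a_i\}_{i=1}^n$ be a non-decreasing sequence of real numbers and $\tau>0$. If $\pi$ is a permutation of $[n]$ such that $\pi(i)<\pi(j)$ whenever $a_j-a_i>\tau$, then $|a_{\pi(i)}-a_i|\le\tau$ for all $i\in[n]$. *)

theory Defs
  imports Main "HOL-Combinatorics.Permutations" Complex_Main
begin

end

theory Submission
  imports Defs
begin

theorem lemma13:
  fixes a :: "nat \<Rightarrow> real" and n :: nat and \<tau> :: real and \<pi> :: "nat \<Rightarrow> nat"
  assumes mono: "\<And>i j. i \<in> {1..n} \<Longrightarrow> j \<in> {1..n} \<Longrightarrow> i \<le> j \<Longrightarrow> a i \<le> a j"
    and tau: "\<tau> > 0"
    and perm: "\<pi> permutes {1..n}"
    and cond: "\<And>i j. i \<in> {1..n} \<Longrightarrow> j \<in> {1..n} \<Longrightarrow> a j - a i > \<tau> \<Longrightarrow> \<pi> i < \<pi> j"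
  shows "\<forall>i \<in> {1..n}. \<bar>a (\<pi> i) - a i\<bar> \<le> \<tau>"
proof (rule ballI, rule ccontr)
  fix i assume i: "i \<in> {1..n}" and ne: "\<not> \<bar>a (\<pi> i) - a i\<bar> \<le> \<tau>"
  have inj: "inj \<pi>" using perm by (rule permutes_inj)
  have pin: "\<And>x. x \<in> {1..n} \<Longrightarrow> \<pi> x \<in> {1..n}" by (simp only: permutes_in_image[OF perm])
  define k where "k = \<pi> i"
  have k: "k \<in> {1..n}" using pin[OF i] k_def by simp
  show False
  proof (cases "a k - a i > \<tau>")
    case True
    have "\<And>j. j \<in> {k..n} \<Longrightarrow> \<pi> j \<in> {k+1..n}"
    proof -
      fix j assume j: "j \<in> {k..n}"
      have j1: "j \<in> {1..n}" using j k by auto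
      have "a k \<le> a j" using mono[OF k j1] j by auto
      hence "\<pi> i < \<pi> j" using cond[OF i j1] True by linarith
      thus "\<pi> j \<in> {k+1..n}" using pin[OF j1] k_def by auto
    qed
    hence "\<pi> ` {k..n} \<subseteq> {k+1..n}" by auto
    hence "card (\<pi> ` {k..n}) \<le> card {k+1..n}" by (intro card_mono) auto
    moreover have "card (\<pi> ` {k..n}) = card {k..n}"
      using inj by (intro card_image) (auto intro: inj_on_subset)
    ultimately show False using k by auto
  next
    case False
    hence F: "a i - a k > \<tau>" using ne k_def by auto
    have "\<And>j. j \<in> {1..k} \<Longrightarrow> \<pi> j \<in> {1..<k}"
    proof -
      fix j assume j: "j \<in> {1..k}"
      have j1: "j \<in> {1..n}" using j k by auto
      have "a j \<le> a k" using mono[OF j1 k] j by auto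
      hence "\<pi> j < \<pi> i" using cond[OF j1 i] F by linarith
      thus "\<pi> j \<in> {1..<k}" using pin[OF j1] k_def by auto
    qed
    hence "\<pi> ` {1..k} \<subseteq> {1..<k}" by auto
    hence "card (\<pi> ` {1..k}) \<le> card {1..<k}" by (intro card_mono) auto
    moreover have "card (\<pi> ` {1..k}) = card {1..k}"
      using inj by (intro card_image) (auto intro: inj_on_subset)
    ultimately show False using k by auto
  qed
qed

end
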